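(* Let $\mathbb{H}_1,\mathbb{H}_2$ be complex Hilbert spaces. Let $T\in \mathbb{L}(\mathbb{H}_1,\mathbb{H}_2)$ with $\|T\|=1$ be such that $\operatorname{dist}(T,\mathbb{K}(\mathbb{H}_1,\mathbb{H}_2))<1$. Then for $A\in \mathbb{L}(\mathbb{H}_1,\mathbb{H}_2)$, $T\perp_B A$ if and only if there exists $x\in M_T$ such that $\langle Ax,Tx\rangle=0$.
   Context: $\mathbb{L}(\mathbb{H}_1,\mathbb{H}_2)$ ($\mathbb{K}(\mathbb{H}_1,\mathbb{H}_2)$) is the space of bounded (compact) linear operators with the operator norm. $M_T=\{x\in\mathbb{H}_1:\|x\|=1,\ \|Tx\|=\|T\|\}$. Birkhoff–James orthogonality: $T\perp_B A$ means $\|T+\lambda A\|\geq \|T\|$ for every complex scalar $\lambda$. *)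

theory Defs
  imports "HOL-Analysis.Analysis"
begin

text \<open>Complex inner product spaces (the library only has real ones).\<close>
class complex_inner = real_normed_vector +
  fixes scaleC :: "complex \<Rightarrow> 'a \<Rightarrow> 'a"
    and cinner :: "'a \<Rightarrow> 'a \<Rightarrow> complex"
  assumes scaleC_add_right: "scaleC a (x + y) = scaleC a x + scaleC a y"
    and scaleC_add_left: "scaleC (a + b) x = scaleC a x + scaleC b x"
    and scaleC_scaleC: "scaleC a (scaleC b x) = scaleC (a * b) x"
    and scaleC_one: "scaleC 1 x = x"
    and scaleC_of_real: "scaleC (complex_of_real r) x = scaleR r x"
    and cinner_commute: "cinner x y = cnj (cinner y x)"
    and cinner_add_left: "cinner (x + y) z = cinner x z + cinner y z"
    and cinner_scaleC_left: "cinner (scaleC a x) y = a * cinner x y"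
    and cinner_self_norm: "cinner x x = complex_of_real ((norm x)\<^sup>2)"

class chilbert = complex_inner + complete_space

definition cbounded_linear :: "('a::complex_inner \<Rightarrow> 'b::complex_inner) \<Rightarrow> bool" where
  "cbounded_linear T \<longleftrightarrow>
     (\<forall>x y. T (x + y) = T x + T y) \<and>
     (\<forall>c x. T (scaleC c x) = scaleC c (T x)) \<and>
     (\<exists>K. \<forall>x. norm (T x) \<le> norm x * K)"

definition compact_operator :: "('a::complex_inner \<Rightarrow> 'b::complex_inner) \<Rightarrow> bool" where
  "compact_operator T \<longleftrightarrow> cbounded_linear T \<and> compact (closure (T ` cball 0 1))"

definition dist_compacts :: "('a::complex_inner \<Rightarrow> 'b::complex_inner) \<Rightarrow> real" where
  "dist_compacts T = Inf ((\<lambda>K. onorm (\<lambda>x. T x - K x)) ` {K. compact_operator K})"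

definition norm_attain_set :: "('a::complex_inner \<Rightarrow> 'b::complex_inner) \<Rightarrow> 'a set" where
  "norm_attain_set T = {x. norm x = 1 \<and> norm (T x) = onorm T}"

definition BJ_orth :: "('a::complex_inner \<Rightarrow> 'b::complex_inner) \<Rightarrow> ('a \<Rightarrow> 'b) \<Rightarrow> bool" where
  "BJ_orth T A \<longleftrightarrow> (\<forall>l::complex. onorm (\<lambda>x. T x + scaleC l (A x)) \<ge> onorm T)"

end

theory Submission
  imports Defs
begin

lemma cinner_zero_left[simp]: "cinner (0::'a::complex_inner) y = 0"
  using cinner_add_left[of 0 0 y] by simp

lemma cinner_minus_left[simp]: "cinner (- x::'a::complex_inner) y = - cinner x y"
  using cinner_add_left[of x "-x" y] by (simp add: add_eq_0_iff)

lemma cinner_diff_left: "cinner (x - y) z = cinner x z - cinner y z"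
  using cinner_add_left[of x "-y" z] by simp

lemma cinner_add_right: "cinner x (y + z) = cinner x y + cinner x z"
  by (subst (1 2 3) cinner_commute) (simp add: cinner_add_left)

lemma cinner_zero_right[simp]: "cinner x 0 = 0"
  by (subst cinner_commute) simp

lemma cinner_minus_right[simp]: "cinner x (- y) = - cinner x y"
  by (subst (1 2) cinner_commute) simp

lemma cinner_diff_right: "cinner x (y - z) = cinner x y - cinner x z"
  using cinner_add_right[of x y "-z"] by simp

lemma cinner_scaleC_right: "cinner x (scaleC a y) = cnj a * cinner x y"
  by (subst (1 2) cinner_commute) (simp add: cinner_scaleC_left)

lemma cinner_scaleR_left: "cinner (scaleR r x) y = complex_of_real r * cinner x y"
  by (simp add: scaleC_of_real[symmetric] cinner_scaleC_left)

lemma cinner_scaleR_right: "cinner x (scaleR r y) = complex_of_real r * cinner x y"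
  by (simp add: scaleC_of_real[symmetric] cinner_scaleC_right)

lemma scaleC_zero_right[simp]: "scaleC a (0::'a::complex_inner) = 0"
  using scaleC_add_right[of a 0 0] by simp

lemma scaleC_zero_left[simp]: "scaleC 0 (x::'a::complex_inner) = 0"
  using scaleC_of_real[of 0 x] by simp

lemma scaleC_minus_right: "scaleC a (- x::'a::complex_inner) = - scaleC a x"
  using scaleC_add_right[of a x "-x"] by (simp add: add_eq_0_iff)

lemma scaleC_diff_right: "scaleC a (x - y) = scaleC a x - scaleC a y"
  using scaleC_add_right[of a x "-y"] by (simp add: scaleC_minus_right)

lemma scaleC_scaleR_commute: "scaleC a (scaleR r x) = scaleR r (scaleC a x)"
  by (simp add: scaleC_of_real[symmetric] scaleC_scaleC mult.commute)

lemma cinner_self_Re: "Re (cinner x x) = (norm x)\<^sup>2"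
  by (simp add: cinner_self_norm)

lemma cinner_self_Im: "Im (cinner x x) = 0"
  by (simp add: cinner_self_norm)

lemma norm_add_sq: "(norm (x + y))\<^sup>2 = (norm x)\<^sup>2 + (norm y)\<^sup>2 + 2 * Re (cinner x y)"
proof -
  have "Re (cinner (x+y) (x+y)) = Re (cinner x x) + Re (cinner y y) + Re (cinner x y) + Re (cinner y x)"
    by (simp add: cinner_add_left cinner_add_right)
  moreover have "Re (cinner y x) = Re (cinner x y)"
    by (subst cinner_commute) simp
  ultimately show ?thesis by (simp add: cinner_self_Re)
qed

lemma norm_diff_sq: "(norm (x - y))\<^sup>2 = (norm x)\<^sup>2 + (norm y)\<^sup>2 - 2 * Re (cinner x y)"
  using norm_add_sq[of x "-y"] by simp

lemma norm_scaleC: "norm (scaleC a x) = cmod a * norm x"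
proof -
  have "complex_of_real ((norm (scaleC a x))\<^sup>2) = a * cnj a * complex_of_real ((norm x)\<^sup>2)"
    unfolding cinner_self_norm[symmetric] by (simp add: cinner_scaleC_left cinner_scaleC_right)
  also have "a * cnj a = complex_of_real ((cmod a)\<^sup>2)"
    by (simp only: complex_norm_square)
  finally have "(norm (scaleC a x))\<^sup>2 = (cmod a * norm x)\<^sup>2"
    by (metis of_real_eq_iff of_real_mult power_mult_distrib)
  then show ?thesis by (simp add: power2_eq_iff_nonneg)
qed

lemma cauchy_schwarz: "cmod (cinner x y) \<le> norm x * norm y"
proof (cases "y = 0")
  case True then show ?thesis by simp
next
  case False
  then have ny: "norm y > 0" by simp
  define c where "c = cinner x y / complex_of_real ((norm y)\<^sup>2)"
  have "0 \<le> (norm (x - scaleC c y))\<^sup>2" by simp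
  also have "\<dots> = (norm x)\<^sup>2 + (cmod c)\<^sup>2 * (norm y)\<^sup>2 - 2 * Re (cnj c * cinner x y)"
    by (simp add: norm_diff_sq norm_scaleC cinner_scaleC_right power_mult_distrib)
  also have "cnj c * cinner x y = complex_of_real ((cmod (cinner x y))\<^sup>2 / (norm y)\<^sup>2)"
    unfolding c_def using ny
    by (simp add: complex_norm_square mult.commute del: of_real_power)
  also have "(cmod c)\<^sup>2 * (norm y)\<^sup>2 = (cmod (cinner x y))\<^sup>2 / (norm y)\<^sup>2"
    unfolding c_def using ny by (simp add: norm_divide power_divide norm_mult power2_eq_square)
  finally have "(cmod (cinner x y))\<^sup>2 / (norm y)\<^sup>2 \<le> (norm x)\<^sup>2" by simp
  then have "(cmod (cinner x y))\<^sup>2 \<le> (norm x * norm y)\<^sup>2"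
    using ny by (simp add: divide_le_eq power_mult_distrib)
  then show ?thesis
    by (meson norm_ge_zero power2_le_imp_le mult_nonneg_nonneg)
qed

lemma cbl_add: "cbounded_linear T \<Longrightarrow> T (x + y) = T x + T y"
  unfolding cbounded_linear_def by blast

lemma cbl_scaleC: "cbounded_linear T \<Longrightarrow> T (scaleC c x) = scaleC c (T x)"
  unfolding cbounded_linear_def by blast

lemma cbl_scaleR:
  fixes T :: "'a::complex_inner \<Rightarrow> 'b::complex_inner"
  shows "cbounded_linear T \<Longrightarrow> T (scaleR r x) = scaleR r (T x)"
  using cbl_scaleC[of T "complex_of_real r" x] by (simp add: scaleC_of_real)

lemma cbl_bl:
  fixes T :: "'a::complex_inner \<Rightarrow> 'b::complex_inner"
  assumes "cbounded_linear T" shows "bounded_linear T"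
proof -
  obtain K where K: "\<And>x. norm (T x) \<le> norm x * K"
    using assms unfolding cbounded_linear_def by blast
  show ?thesis
    by (rule bounded_linear_intro[where K=K]) (use assms K cbl_add cbl_scaleR in auto)
qed

lemma bl_scaleC: "bounded_linear (\<lambda>x::'a::complex_inner. scaleC l x)"
  by (rule bounded_linear_intro[where K="cmod l"])
     (auto simp: scaleC_add_right scaleC_scaleR_commute norm_scaleC mult.commute)

lemma bl_comb:
  fixes T A :: "'a::complex_inner \<Rightarrow> 'b::complex_inner"
  assumes "cbounded_linear T" "cbounded_linear A"
  shows "bounded_linear (\<lambda>x. T x + scaleC l (A x))"
proof -
  have "bounded_linear (\<lambda>x. scaleC l (A x))"
    using bounded_linear_compose[OF bl_scaleC cbl_bl[OF assms(2)]] by simp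
  then show ?thesis using bounded_linear_add[OF cbl_bl[OF assms(1)]] by blast
qed

lemma bb_cinner: "bounded_bilinear (cinner :: 'a::complex_inner \<Rightarrow> 'a \<Rightarrow> complex)"
proof
  fix a a' b b' :: 'a and r :: real
  show "cinner (a + a') b = cinner a b + cinner a' b" by (rule cinner_add_left)
  show "cinner b (a + a') = cinner b a + cinner b a'" by (rule cinner_add_right)
  show "cinner (r *\<^sub>R a) b = r *\<^sub>R cinner a b" by (simp add: cinner_scaleR_left scaleR_conv_of_real)
  show "cinner a (r *\<^sub>R b) = r *\<^sub>R cinner a b" by (simp add: cinner_scaleR_right scaleR_conv_of_real)
  show "\<exists>K. \<forall>a b::'a. norm (cinner a b) \<le> norm a * norm b * K"
    by (rule exI[where x=1]) (simp add: cauchy_schwarz)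
qed

lemma onorm_approx:
  fixes f :: "'a::real_normed_vector \<Rightarrow> 'b::real_normed_vector"
  assumes f: "bounded_linear f" and c: "0 \<le> c" "c < onorm f"
  shows "\<exists>x. norm x = 1 \<and> c < norm (f x)"
proof -
  have bdd: "bdd_above (range (\<lambda>x. norm (f x) / norm x))"
    using le_onorm[OF f] by (intro bdd_aboveI2) auto
  from c have "c < (SUP x. norm (f x) / norm x)" by (simp add: onorm_def)
  then obtain x where x: "c < norm (f x) / norm x"
    using less_cSUP_iff[OF _ bdd] by auto
  then have "x \<noteq> 0" using c by auto
  define y where "y = scaleR (1 / norm x) x"
  have "norm y = 1" using \<open>x \<noteq> 0\<close> by (simp add: y_def)
  moreover have "f y = scaleR (1 / norm x) (f x)"
    unfolding y_def using f by (simp add: linear_simps)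
  then have "norm (f y) = norm (f x) / norm x" by simp
  ultimately show ?thesis using x by auto
qed

lemma iso_inner:
  fixes T :: "'a::complex_inner \<Rightarrow> 'b::complex_inner"
  assumes T: "cbounded_linear T" and n: "onorm T = 1" and x: "norm (T x) = norm x"
  shows "cinner (T x) (T y) = cinner x y"
proof -
  have bl: "bounded_linear T" by (rule cbl_bl[OF T])
  define d where "d = cinner (T x) (T y) - cinner x y"
  define t where "t = 1 / ((norm y)\<^sup>2 + 1)"
  have p: "0 < 1 + (norm y)\<^sup>2" by (simp add: add_pos_nonneg)
  have t: "t > 0" "t * (norm y)\<^sup>2 < 1" unfolding t_def using p by (auto simp: field_simps)
  define c where "c = complex_of_real t * d"
  have le: "norm (T (x + scaleC c y)) \<le> norm (x + scaleC c y)"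
    using onorm[OF bl, of "x + scaleC c y"] n by simp
  have "(norm (T (x + scaleC c y)))\<^sup>2 \<le> (norm (x + scaleC c y))\<^sup>2"
    using le by (simp add: power_mono)
  then have "(norm (T x))\<^sup>2 + (cmod c * norm (T y))\<^sup>2 + 2 * Re (cnj c * cinner (T x) (T y))
      \<le> (norm x)\<^sup>2 + (cmod c * norm y)\<^sup>2 + 2 * Re (cnj c * cinner x y)"
    by (simp add: cbl_add[OF T] cbl_scaleC[OF T] norm_add_sq norm_scaleC cinner_scaleC_right)
  then have "2 * Re (cnj c * d) \<le> (cmod c * norm y)\<^sup>2 - (cmod c * norm (T y))\<^sup>2"
    using x by (simp add: d_def algebra_simps)
  also have "\<dots> \<le> (cmod c * norm y)\<^sup>2" by simp
  finally have "2 * Re (cnj c * d) \<le> (cmod c)\<^sup>2 * (norm y)\<^sup>2" by (simp add: power_mult_distrib)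
  moreover have "Re (cnj c * d) = t * (cmod d)\<^sup>2"
    unfolding c_def cmod_power2 by (simp add: power2_eq_square algebra_simps)
  moreover have "(cmod c)\<^sup>2 = t\<^sup>2 * (cmod d)\<^sup>2"
    unfolding c_def using t by (simp add: norm_mult power_mult_distrib)
  ultimately have "2 * t * (cmod d)\<^sup>2 \<le> t * (t * (norm y)\<^sup>2) * (cmod d)\<^sup>2"
    by (simp add: power2_eq_square algebra_simps)
  then have "2 * (cmod d)\<^sup>2 \<le> (t * (norm y)\<^sup>2) * (cmod d)\<^sup>2"
    using t by (simp add: mult.assoc)
  also have "\<dots> \<le> 1 * (cmod d)\<^sup>2" using t by (intro mult_right_mono) auto
  finally have "cmod d = 0" by simp
  then show ?thesis by (simp add: d_def)
qed

lemma compact_operator_zero: "compact_operator (\<lambda>x::'a::complex_inner. 0::'b::complex_inner)"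
proof -
  have "cbounded_linear (\<lambda>x::'a. 0::'b)" unfolding cbounded_linear_def by (auto intro: exI[where x=0])
  moreover have "(\<lambda>x::'a. 0::'b) ` cball 0 1 = {0}" by (auto intro!: image_eqI[where x=0])
  ultimately show ?thesis unfolding compact_operator_def by simp
qed

lemma key_ineq:
  fixes T K :: "'a::complex_inner \<Rightarrow> 'b::complex_inner"
  assumes T: "cbounded_linear T" and K: "cbounded_linear K"
    and Tle: "\<And>z. norm (T z) \<le> norm z"
    and Sle: "\<And>z. norm (T z - K z) \<le> s * norm z" and s: "0 \<le> s" "s < 1"
    and a: "norm a = 1" and b: "norm b = 1"
  shows "(1 - s\<^sup>2) * (norm (a - b))\<^sup>2 \<le> (2 - 2 * (norm (T a))\<^sup>2) + (2 - 2 * (norm (T b))\<^sup>2)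
           + 4 * norm (K a - K b) + (norm (K a - K b))\<^sup>2"
proof -
  define u where "u = a - b"
  define v where "v = a + b"
  define D where "D = norm (K a - K b)"
  have Tu: "T u = T a - T b" unfolding u_def using linear_diff[OF bounded_linear.linear[OF cbl_bl[OF T]]] by simp
  have Tv: "T v = T a + T b" unfolding v_def using cbl_add[OF T] by simp
  have Ku: "K u = K a - K b" unfolding u_def using linear_diff[OF bounded_linear.linear[OF cbl_bl[OF K]]] by simp
  have uv: "(norm u)\<^sup>2 + (norm v)\<^sup>2 = 4"
    unfolding u_def v_def using a b by (simp add: norm_add_sq norm_diff_sq)
  have Tuv: "(norm (T u))\<^sup>2 + (norm (T v))\<^sup>2 = 2 * (norm (T a))\<^sup>2 + 2 * (norm (T b))\<^sup>2"
    unfolding Tu Tv by (simp add: norm_add_sq norm_diff_sq)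
  have nu: "norm u \<le> 2" unfolding u_def using norm_triangle_ineq4[of a b] a b by simp
  have "norm (T u) \<le> norm (T u - K u) + norm (K u)" using norm_triangle_ineq[of "T u - K u" "K u"] by simp
  also have "\<dots> \<le> s * norm u + D" using Sle[of u] Ku D_def by simp
  finally have Tu1: "norm (T u) \<le> s * norm u + D" .
  have D0: "0 \<le> D" by (simp add: D_def)
  have "(norm (T u))\<^sup>2 \<le> (s * norm u + D)\<^sup>2" using Tu1 by (simp add: power_mono)
  also have "\<dots> = s\<^sup>2 * (norm u)\<^sup>2 + 2 * (s * norm u) * D + D\<^sup>2" by (simp add: power2_eq_square algebra_simps)
  also have "2 * (s * norm u) * D \<le> 2 * 2 * D"
  proof -
    have "s * norm u \<le> 1 * 2" using s nu by (intro mult_mono) auto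
    then show ?thesis using D0 by (simp add: mult_right_mono)
  qed
  finally have A1: "(norm (T u))\<^sup>2 \<le> s\<^sup>2 * (norm u)\<^sup>2 + 4 * D + D\<^sup>2" by simp
  have A2: "(norm (T v))\<^sup>2 \<le> (norm v)\<^sup>2" using Tle[of v] by (simp add: power_mono)
  have "2 * (norm (T a))\<^sup>2 + 2 * (norm (T b))\<^sup>2 \<le> s\<^sup>2 * (norm u)\<^sup>2 + 4 * D + D\<^sup>2 + (4 - (norm u)\<^sup>2)"
    using A1 A2 uv Tuv by linarith
  then show ?thesis unfolding u_def[symmetric] D_def[symmetric] by (simp add: algebra_simps)
qed

lemma seq_comp:
  fixes T :: "'a::chilbert \<Rightarrow> 'b::chilbert"
  assumes T: "cbounded_linear T" and n1: "onorm T = 1" and dc: "dist_compacts T < 1"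
    and x: "\<And>n. norm (x n) = 1" and lim: "(\<lambda>n. norm (T (x n))) \<longlonglongrightarrow> 1"
  shows "\<exists>r y. strict_mono r \<and> (x \<circ> r) \<longlonglongrightarrow> y \<and> norm y = 1 \<and> norm (T y) = 1"
proof -
  have ne: "(\<lambda>K. onorm (\<lambda>x. T x - K x)) ` {K. compact_operator K} \<noteq> {}"
    using compact_operator_zero by blast
  obtain K where Kc: "compact_operator K" and Ks: "onorm (\<lambda>x. T x - K x) < 1"
    using cInf_lessD[OF ne dc[unfolded dist_compacts_def]] by blast
  define s where "s = onorm (\<lambda>x. T x - K x)"
  have K: "cbounded_linear K" using Kc by (simp add: compact_operator_def)
  have blT: "bounded_linear T" by (rule cbl_bl[OF T])
  have blS: "bounded_linear (\<lambda>x. T x - K x)" by (intro bounded_linear_sub blT cbl_bl[OF K])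
  have s: "0 \<le> s" "s < 1" using Ks onorm_pos_le[OF blS] by (auto simp: s_def)
  have Sle: "\<And>z. norm (T z - K z) \<le> s * norm z" using onorm[OF blS] by (simp add: s_def)
  have Tle: "\<And>z. norm (T z) \<le> norm z" using onorm[OF blT] n1 by simp
  have "compact (closure (K ` cball 0 1))" using Kc by (simp add: compact_operator_def)
  then have sc: "seq_compact (closure (K ` cball 0 1))" by (rule compact_imp_seq_compact)
  have "\<forall>n. K (x n) \<in> closure (K ` cball 0 1)"
    using x by (intro allI closure_subset[THEN subsetD]) auto
  then obtain l r where r: "strict_mono r" and Kl: "((\<lambda>n. K (x n)) \<circ> r) \<longlonglongrightarrow> l"
    using sc unfolding seq_compact_def by (metis (no_types, lifting))
  define y where "y = x \<circ> r"
  have y1: "\<And>n. norm (y n) = 1" using x by (simp add: y_def)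
  have Ky: "(\<lambda>n. K (y n)) \<longlonglongrightarrow> l" using Kl by (simp add: y_def o_def)
  have Ty: "(\<lambda>n. norm (T (y n))) \<longlonglongrightarrow> 1"
    using LIMSEQ_subseq_LIMSEQ[OF lim r] by (simp add: y_def o_def)
  have Ty2: "(\<lambda>n. 2 - 2 * (norm (T (y n)))\<^sup>2) \<longlonglongrightarrow> 0"
    using tendsto_diff[OF tendsto_const[of 2] tendsto_mult[OF tendsto_const[of 2] tendsto_power[OF Ty, of 2]]]
    by simp
  have "Cauchy y"
  proof (rule metric_CauchyI)
    fix e :: real assume e: "0 < e"
    define \<eta> where "\<eta> = min 1 ((1 - s\<^sup>2) * e\<^sup>2 / 7)"
    have s2: "0 < 1 - s\<^sup>2" using s by (simp add: power_less_one_iff abs_square_less_1)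
    have eta: "0 < \<eta>" "\<eta> \<le> 1" "7 * \<eta> \<le> (1 - s\<^sup>2) * e\<^sup>2" using e s2 by (auto simp: \<eta>_def)
    obtain M1 where M1: "\<And>n. n \<ge> M1 \<Longrightarrow> norm ((2 - 2 * (norm (T (y n)))\<^sup>2) - 0) < \<eta>"
      using LIMSEQ_D[OF Ty2 eta(1)] by blast
    obtain M2 where M2: "\<And>n. n \<ge> M2 \<Longrightarrow> norm (K (y n) - l) < \<eta> / 2"
      using LIMSEQ_D[OF Ky, of "\<eta>/2"] eta by auto
    show "\<exists>M. \<forall>m\<ge>M. \<forall>n\<ge>M. dist (y m) (y n) < e"
    proof (intro exI allI impI)
      fix m n assume m: "max M1 M2 \<le> m" and n: "max M1 M2 \<le> n"
      define D where "D = norm (K (y m) - K (y n))"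
      have "D \<le> norm (K (y m) - l) + norm (K (y n) - l)"
        unfolding D_def using norm_triangle_ineq4[of "K (y m) - l" "K (y n) - l"] by simp
      then have D: "D < \<eta>" using M2[of m] M2[of n] m n by simp
      have D0: "0 \<le> D" by (simp add: D_def)
      have DD: "D\<^sup>2 < \<eta>" using D D0 eta by (smt (verit) mult_left_le power2_eq_square)
      have am: "2 - 2 * (norm (T (y m)))\<^sup>2 < \<eta>" using M1[of m] m by simp
      have an: "2 - 2 * (norm (T (y n)))\<^sup>2 < \<eta>" using M1[of n] n by simp
      have "(1 - s\<^sup>2) * (norm (y m - y n))\<^sup>2 \<le> (2 - 2 * (norm (T (y m)))\<^sup>2) + (2 - 2 * (norm (T (y n)))\<^sup>2)
           + 4 * D + D\<^sup>2"
        unfolding D_def by (rule key_ineq[OF T K Tle Sle s y1 y1])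
      also have "\<dots> < 7 * \<eta>" using am an D DD by linarith
      also have "\<dots> \<le> (1 - s\<^sup>2) * e\<^sup>2" by (rule eta(3))
      finally have "(norm (y m - y n))\<^sup>2 < e\<^sup>2" using s2 by simp
      then have "norm (y m - y n) < e" using e by (simp add: power_less_imp_less_base)
      then show "dist (y m) (y n) < e" by (simp add: dist_norm)
    qed
  qed
  then obtain z where z: "y \<longlonglongrightarrow> z" using Cauchy_convergent_iff convergent_def by blast
  have "(\<lambda>n. norm (y n)) \<longlonglongrightarrow> norm z" by (rule tendsto_norm[OF z])
  then have nz: "norm z = 1" using y1 by (simp add: LIMSEQ_const_iff)
  have "(\<lambda>n. norm (T (y n))) \<longlonglongrightarrow> norm (T z)"
    by (rule tendsto_norm[OF bounded_linear.tendsto[OF blT z]])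
  then have "norm (T z) = 1" using Ty LIMSEQ_unique by blast
  then show ?thesis using r z nz by (auto simp: y_def)
qed

lemma sesq_comb:
  fixes A T :: "'a::complex_inner \<Rightarrow> 'b::complex_inner"
  assumes A: "cbounded_linear A" and T: "cbounded_linear T"
  shows "cinner (A (scaleC \<alpha> u + scaleC \<beta> v)) (T (scaleC \<alpha> u + scaleC \<beta> v)) =
     \<alpha> * cnj \<alpha> * cinner (A u) (T u) + \<alpha> * cnj \<beta> * cinner (A u) (T v)
     + \<beta> * cnj \<alpha> * cinner (A v) (T u) + \<beta> * cnj \<beta> * cinner (A v) (T v)"
  by (simp add: cbl_add[OF A] cbl_add[OF T] cbl_scaleC[OF A] cbl_scaleC[OF T]
        cinner_add_left cinner_add_right cinner_scaleC_left cinner_scaleC_right algebra_simps)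

lemma inner_comb:
  fixes u v :: "'a::complex_inner"
  shows "cinner (scaleC \<alpha> u + scaleC \<beta> v) (scaleC \<alpha> u + scaleC \<beta> v) =
     \<alpha> * cnj \<alpha> * cinner u u + \<alpha> * cnj \<beta> * cinner u v
     + \<beta> * cnj \<alpha> * cinner v u + \<beta> * cnj \<beta> * cinner v v"
  by (simp add: cinner_add_left cinner_add_right cinner_scaleC_left cinner_scaleC_right algebra_simps)

lemma sesq_scale:
  fixes A T :: "'a::complex_inner \<Rightarrow> 'b::complex_inner"
  assumes A: "cbounded_linear A" and T: "cbounded_linear T"
  shows "cinner (A (scaleC c u)) (T (scaleC c u)) = c * cnj c * cinner (A u) (T u)"
  by (simp add: cbl_scaleC[OF A] cbl_scaleC[OF T] cinner_scaleC_left cinner_scaleC_right)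

lemma iso_comb:
  fixes T :: "'a::complex_inner \<Rightarrow> 'b::complex_inner"
  assumes T: "cbounded_linear T" and n: "onorm T = 1"
    and x: "norm (T x) = norm x" and y: "norm (T y) = norm y"
  shows "norm (T (scaleC \<alpha> x + scaleC \<beta> y)) = norm (scaleC \<alpha> x + scaleC \<beta> y)"
proof -
  have i1: "\<And>v. cinner (T x) (T v) = cinner x v" by (rule iso_inner[OF T n x])
  have i2: "\<And>v. cinner (T y) (T v) = cinner y v" by (rule iso_inner[OF T n y])
  have "cinner (T (scaleC \<alpha> x + scaleC \<beta> y)) (T (scaleC \<alpha> x + scaleC \<beta> y))
      = cinner (scaleC \<alpha> x + scaleC \<beta> y) (scaleC \<alpha> x + scaleC \<beta> y)"
    by (simp add: cbl_add[OF T] cbl_scaleC[OF T] inner_comb i1 i2)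
  then have "complex_of_real ((norm (T (scaleC \<alpha> x + scaleC \<beta> y)))\<^sup>2)
      = complex_of_real ((norm (scaleC \<alpha> x + scaleC \<beta> y))\<^sup>2)"
    by (simp only: cinner_self_norm)
  then have "(norm (T (scaleC \<alpha> x + scaleC \<beta> y)))\<^sup>2 = (norm (scaleC \<alpha> x + scaleC \<beta> y))\<^sup>2"
    using of_real_eq_iff by blast
  then show ?thesis by (simp add: power2_eq_iff_nonneg)
qed

lemma rotate_real: "\<exists>\<omega>. cmod \<omega> = 1 \<and> Im (\<omega> * R) = 0"
proof (cases "R = 0")
  case True then show ?thesis by (intro exI[where x=1]) simp
next
  case False
  define \<omega> where "\<omega> = cnj R / complex_of_real (cmod R)"
  have "cmod \<omega> = 1" using False by (simp add: \<omega>_def norm_divide)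
  moreover have "\<omega> * R = complex_of_real (cmod R)"
  proof -
    have "R * cnj R = complex_of_real (cmod R) * complex_of_real (cmod R)"
      by (metis complex_norm_square of_real_mult power2_eq_square)
    then show ?thesis using False by (simp add: \<omega>_def field_simps)
  qed
  ultimately show ?thesis by (intro exI[where x=\<omega>]) simp
qed

lemma scaleC_minus_left: "scaleC (- a) (x::'a::complex_inner) = - scaleC a x"
  using scaleC_add_left[of a "-a" x] by (simp add: add_eq_0_iff)

lemma Im_cnj_mult: "Im (cnj w * p) = - Im (w * cnj p)"
  by (cases w, cases p) simp

lemma toeplitz:
  fixes T A :: "'a::complex_inner \<Rightarrow> 'b::complex_inner"
  assumes T: "cbounded_linear T" and A: "cbounded_linear A" and n: "onorm T = 1"
    and x1: "norm x = 1" and x2: "norm (T x) = 1" and y1: "norm y = 1" and y2: "norm (T y) = 1"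
    and \<tau>: "0 \<le> \<tau>" "\<tau> \<le> 1"
  shows "\<exists>z. norm z = 1 \<and> norm (T z) = 1 \<and>
    cinner (A z) (T z) = cinner (A x) (T x) + complex_of_real \<tau> * (cinner (A y) (T y) - cinner (A x) (T x))"
proof (cases "cinner (A x) (T x) = cinner (A y) (T y)")
  case True then show ?thesis using x1 x2 by (intro exI[where x=x]) simp
next
  case False
  define a where "a = cinner (A x) (T x)"
  define b where "b = cinner (A y) (T y)"
  have ab: "b - a \<noteq> 0" using False by (simp add: a_def b_def)
  define Bxy where "Bxy = cinner (A x) (T y)"
  define Byx where "Byx = cinner (A y) (T x)"
  define ixy where "ixy = cinner x y"
  define iyx where "iyx = cinner y x"
  have ixy: "ixy = cnj iyx" unfolding ixy_def iyx_def by (rule cinner_commute)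
  have ixx: "cinner x x = 1" using x1 by (simp add: cinner_self_norm)
  have iyy: "cinner y y = 1" using y1 by (simp add: cinner_self_norm)
  define P where "P = Bxy - a * ixy"
  define Q where "Q = Byx - a * iyx"
  define R where "R = Q / (b - a) - cnj (P / (b - a))"
  obtain \<omega> where \<omega>1: "cmod \<omega> = 1" and \<omega>R: "Im (\<omega> * R) = 0" using rotate_real by blast
  have h\<omega>: "\<omega> * cnj \<omega> = 1"
    using \<omega>1 by (metis complex_norm_square of_real_1 one_power2)
  define E where "E = cnj \<omega> * P + \<omega> * Q"
  have "E / (b - a) = cnj \<omega> * (P / (b - a)) + \<omega> * (Q / (b - a))"
    unfolding E_def by (simp add: add_divide_distrib)
  moreover have "Im (cnj \<omega> * (P / (b - a))) = - Im (\<omega> * cnj (P / (b - a)))"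
    by (rule Im_cnj_mult)
  ultimately have "Im (E / (b - a)) = Im (\<omega> * R)"
    unfolding R_def by (simp add: right_diff_distrib)
  then have "Im (E / (b - a)) = 0" using \<omega>R by simp
  define c where "c = Re (E / (b - a))"
  have Ec: "E = (b - a) * complex_of_real c"
  proof -
    have "E / (b - a) = complex_of_real c"
      using \<open>Im (E / (b - a)) = 0\<close> by (simp add: c_def complex_eq_iff)
    then show ?thesis using ab by (simp add: field_simps)
  qed
  define \<rho> where "\<rho> = Re (\<omega> * iyx)"
  have hsum: "cnj \<omega> * ixy + \<omega> * iyx = complex_of_real (2 * \<rho>)"
    unfolding ixy \<rho>_def using complex_add_cnj[of "\<omega> * iyx"] by (simp add: add.commute)
  define wf where "wf s = scaleC (complex_of_real (1 - s)) x + scaleC (complex_of_real s * \<omega>) y" for s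
  define num where "num s = (1 - s) * s * c + s\<^sup>2" for s :: real
  define den where "den s = (1 - s)\<^sup>2 + s\<^sup>2 + 2 * (1 - s) * s * \<rho>" for s :: real
  have F1c: "cinner (wf s) (wf s) = complex_of_real (den s)" for s
  proof -
    have "cinner (wf s) (wf s) = complex_of_real (1 - s) * complex_of_real (1 - s)
        + complex_of_real (1 - s) * complex_of_real s * (cnj \<omega> * ixy + \<omega> * iyx)
        + complex_of_real s * complex_of_real s * (\<omega> * cnj \<omega>)"
      unfolding wf_def inner_comb ixx iyy ixy_def[symmetric] iyx_def[symmetric]
      by (simp add: algebra_simps)
    also have "\<dots> = complex_of_real (den s)"
      unfolding hsum h\<omega> den_def by (simp add: algebra_simps power2_eq_square)
    finally show ?thesis .
  qed
  have F1: "(norm (wf s))\<^sup>2 = den s" for s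
    using F1c[of s] by (metis cinner_self_norm of_real_eq_iff)
  have F2: "cinner (A (wf s)) (T (wf s)) = a * complex_of_real (den s) + (b - a) * complex_of_real (num s)" for s
  proof -
    have "cinner (A (wf s)) (T (wf s)) = complex_of_real (1 - s) * complex_of_real (1 - s) * a
        + complex_of_real (1 - s) * complex_of_real s * (cnj \<omega> * Bxy + \<omega> * Byx)
        + complex_of_real s * complex_of_real s * (\<omega> * cnj \<omega>) * b"
      unfolding wf_def sesq_comb[OF A T] a_def[symmetric] b_def[symmetric] Bxy_def[symmetric] Byx_def[symmetric]
      by (simp add: algebra_simps)
    also have "cnj \<omega> * Bxy + \<omega> * Byx = E + a * (cnj \<omega> * ixy + \<omega> * iyx)"
      unfolding E_def P_def Q_def by (simp add: algebra_simps)
    finally show ?thesis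
      unfolding hsum h\<omega> Ec den_def num_def by (simp add: algebra_simps power2_eq_square)
  qed
  have F3: "wf s \<noteq> 0" if s: "0 \<le> s" "s \<le> 1" for s
  proof
    assume w0: "wf s = 0"
    then have e1: "scaleC (complex_of_real (1 - s)) x = - scaleC (complex_of_real s * \<omega>) y"
      unfolding wf_def by (simp add: eq_neg_iff_add_eq_0)
    then have "norm (scaleC (complex_of_real (1 - s)) x) = norm (scaleC (complex_of_real s * \<omega>) y)"
      by simp
    then have "cmod (complex_of_real (1 - s)) = s" using s x1 y1 \<omega>1 by (simp add: norm_scaleC norm_mult del: of_real_diff)
    then have "1 - s = s" using s by (simp del: of_real_diff)
    then have s2: "s = 1/2" by simp
    have "x = scaleC 2 (scaleC (complex_of_real (1 - s)) x)"
      unfolding s2 by (simp add: scaleC_scaleC scaleC_one)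
    also have "\<dots> = scaleC (- \<omega>) y"
      unfolding e1 unfolding s2 by (simp add: scaleC_minus_right scaleC_minus_left scaleC_scaleC scaleC_one)
    finally have "x = scaleC (- \<omega>) y" .
    then have "a = (- \<omega>) * cnj (- \<omega>) * b"
      unfolding a_def b_def using sesq_scale[OF A T] by simp
    then have "a = b" using h\<omega> by simp
    then show False using ab by simp
  qed
  have F4: "norm (T (wf s)) = norm (wf s)" for s
    unfolding wf_def by (rule iso_comb[OF T n]) (simp_all add: x1 x2 y1 y2)
  have dpos: "den s > 0" if "0 \<le> s" "s \<le> 1" for s
    using F3[OF that] F1[of s] by (metis zero_less_norm_iff zero_less_power)
  have cont: "continuous_on {0..1} (\<lambda>s. num s / den s)"
    unfolding num_def den_def
    using dpos unfolding den_def by (intro continuous_intros) force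
  have f0: "num 0 / den 0 = 0" by (simp add: num_def den_def)
  have f1: "num 1 / den 1 = 1" by (simp add: num_def den_def)
  obtain s where s: "0 \<le> s" "s \<le> 1" "num s / den s = \<tau>"
    using IVT'[of "\<lambda>s. num s / den s" 0 \<tau> 1] f0 f1 \<tau> cont by auto
  define w where "w = wf s"
  have nw: "norm w > 0" using F3[OF s(1,2)] by (simp add: w_def)
  have dw: "den s = (norm w)\<^sup>2" using F1 by (simp add: w_def)
  define z where "z = scaleC (complex_of_real (1 / norm w)) w"
  have "norm z = 1" using nw by (simp add: z_def norm_scaleC norm_divide)
  moreover have "norm (T z) = 1"
    using nw F4[of s] by (simp add: z_def cbl_scaleC[OF T] norm_scaleC norm_divide w_def)
  moreover have "cinner (A z) (T z) = a + complex_of_real \<tau> * (b - a)"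
  proof -
    have "cinner (A z) (T z) = complex_of_real (1 / norm w) * complex_of_real (1 / norm w) *
        (a * complex_of_real (den s) + (b - a) * complex_of_real (num s))"
      unfolding z_def sesq_scale[OF A T] w_def F2 by simp
    also have "\<dots> = a + (b - a) * complex_of_real (num s / den s)"
      using nw unfolding dw by (simp add: field_simps power2_eq_square)
    finally show ?thesis using s(3) by (simp add: mult.commute)
  qed
  ultimately show ?thesis unfolding a_def b_def by blast
qed

lemma bj_step:
  fixes T A :: "'a::complex_inner \<Rightarrow> 'b::complex_inner"
  assumes T: "cbounded_linear T" and A: "cbounded_linear A" and n: "onorm T = 1"
    and x: "norm x = 1" and \<omega>: "cmod \<omega> = 1" and t: "0 < t" "t \<le> 1"
    and big: "1 - t\<^sup>2 < norm (T x + scaleC (complex_of_real t * \<omega>) (A x))"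
  shows "- t * (2 + (onorm A)\<^sup>2) / 2 \<le> Re (\<omega> * cinner (A x) (T x))"
    and "1 - t * (2 + (onorm A)\<^sup>2 + 2 * onorm A) \<le> norm (T x)"
proof -
  define \<alpha> where "\<alpha> = onorm A"
  define nT where "nT = norm (T x)"
  define nA where "nA = norm (A x)"
  define \<rho> where "\<rho> = Re (\<omega> * cinner (A x) (T x))"
  have blA: "bounded_linear A" by (rule cbl_bl[OF A])
  have blT: "bounded_linear T" by (rule cbl_bl[OF T])
  have nT1: "nT \<le> 1" "0 \<le> nT" using onorm[OF blT, of x] n x by (auto simp: nT_def)
  have nA1: "nA \<le> \<alpha>" "0 \<le> nA" using onorm[OF blA, of x] x by (auto simp: nA_def \<alpha>_def)
  have \<alpha>0: "0 \<le> \<alpha>" using nA1 by simp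
  have "\<rho> \<le> cmod (\<omega> * cinner (A x) (T x))" unfolding \<rho>_def by (rule complex_Re_le_cmod)
  also have "\<dots> \<le> nA * nT" using \<omega> cauchy_schwarz[of "A x" "T x"] by (simp add: norm_mult nA_def nT_def)
  also have "\<dots> \<le> \<alpha> * 1" using nA1 nT1 \<alpha>0 by (intro mult_mono) auto
  finally have \<rho>\<alpha>: "\<rho> \<le> \<alpha>" by simp
  have re: "Re (cinner (T x) (scaleC (complex_of_real t * \<omega>) (A x))) = t * \<rho>"
  proof -
    have "cinner (T x) (scaleC (complex_of_real t * \<omega>) (A x)) = cnj (complex_of_real t * \<omega> * cinner (A x) (T x))"
      by (subst cinner_commute[of "T x"]) (simp add: cinner_scaleC_left)
    then show ?thesis by (simp add: \<rho>_def mult.assoc)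
  qed
  have t1: "0 \<le> 1 - t\<^sup>2" using t by (simp add: power_le_one)
  have "(1 - t\<^sup>2)\<^sup>2 < (norm (T x + scaleC (complex_of_real t * \<omega>) (A x)))\<^sup>2"
    using big t1 by (simp add: power_strict_mono)
  also have "\<dots> = nT\<^sup>2 + t\<^sup>2 * nA\<^sup>2 + 2 * (t * \<rho>)"
    unfolding norm_add_sq re using t \<omega> by (simp add: norm_scaleC norm_mult nT_def nA_def power_mult_distrib)
  finally have E: "(1 - t\<^sup>2)\<^sup>2 < nT\<^sup>2 + t\<^sup>2 * nA\<^sup>2 + 2 * (t * \<rho>)" .
  have q1: "1 - 2 * t\<^sup>2 \<le> (1 - t\<^sup>2)\<^sup>2" using t by (simp add: power2_eq_square algebra_simps)
  have q2: "nT\<^sup>2 \<le> 1" using nT1 by (simp add: power_le_one)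
  have q3: "t\<^sup>2 * nA\<^sup>2 \<le> t\<^sup>2 * \<alpha>\<^sup>2" using nA1 by (intro mult_left_mono power_mono) auto
  have "t * (2 * \<rho> + t * (2 + \<alpha>\<^sup>2)) > 0"
    using E q1 q2 q3 by (simp add: power2_eq_square algebra_simps)
  then have "2 * \<rho> + t * (2 + \<alpha>\<^sup>2) > 0" using t by (simp add: zero_less_mult_iff)
  then show "- t * (2 + (onorm A)\<^sup>2) / 2 \<le> Re (\<omega> * cinner (A x) (T x))"
    by (simp add: \<rho>_def \<alpha>_def)
  have q4: "t * \<rho> \<le> t * \<alpha>" using \<rho>\<alpha> t by simp
  have q5: "t\<^sup>2 \<le> t" using t by (simp add: power2_eq_square mult_left_le)
  have q6: "t\<^sup>2 * \<alpha>\<^sup>2 \<le> t * \<alpha>\<^sup>2" using q5 by (simp add: mult_right_mono)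
  have q7: "nT\<^sup>2 \<le> nT" using nT1 by (simp add: power2_eq_square mult_left_le)
  have "1 - t * (2 + \<alpha>\<^sup>2 + 2 * \<alpha>) \<le> nT"
    using E q1 q3 q4 q5 q6 q7 by (simp add: algebra_simps)
  then show "1 - t * (2 + (onorm A)\<^sup>2 + 2 * onorm A) \<le> norm (T x)"
    by (simp add: nT_def \<alpha>_def)
qed

lemma q_tendsto:
  fixes T A :: "'a::complex_inner \<Rightarrow> 'b::complex_inner"
  assumes T: "cbounded_linear T" and A: "cbounded_linear A" and u: "u \<longlonglongrightarrow> y"
  shows "(\<lambda>n. cinner (A (u n)) (T (u n))) \<longlonglongrightarrow> cinner (A y) (T y)"
  using bounded_bilinear.tendsto[OF bb_cinner bounded_linear.tendsto[OF cbl_bl[OF A] u]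
      bounded_linear.tendsto[OF cbl_bl[OF T] u]] .

theorem theorem2p3:
  fixes T A :: "'a::chilbert \<Rightarrow> 'b::chilbert"
  assumes "cbounded_linear T"
    and "onorm T = 1"
    and "dist_compacts T < 1"
    and "cbounded_linear A"
  shows "BJ_orth T A \<longleftrightarrow> (\<exists>x\<in>norm_attain_set T. cinner (A x) (T x) = 0)"
proof -
  note T = assms(1) and n = assms(2) and dc = assms(3) and A = assms(4)
  define q where "q x = cinner (A x) (T x)" for x
  define M where "M = norm_attain_set T"
  have M: "M = {x. norm x = 1 \<and> norm (T x) = 1}" unfolding M_def norm_attain_set_def n ..
  show ?thesis
  proof
    assume bj: "BJ_orth T A"
    have H1: "\<exists>x\<in>M. 0 \<le> Re (\<omega> * q x)" if \<omega>: "cmod \<omega> = 1" for \<omega>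
    proof -
      define t where "t n = inverse (real (Suc (Suc n)))" for n
      have t: "0 < t n" "t n \<le> 1" for n
      proof -
        have "1 \<le> real (Suc (Suc n))" by simp
        then show "0 < t n" "t n \<le> 1" unfolding t_def by (simp_all add: inverse_le_1_iff)
      qed
      have "\<exists>x. norm x = 1 \<and> 1 - (t n)\<^sup>2 < norm (T x + scaleC (complex_of_real (t n) * \<omega>) (A x))" for n
      proof (rule onorm_approx[OF bl_comb[OF T A]])
        show "0 \<le> 1 - (t n)\<^sup>2" using t[of n] by (simp add: power_le_one)
        have le: "onorm T \<le> onorm (\<lambda>x. T x + scaleC (complex_of_real (t n) * \<omega>) (A x))"
          using bj unfolding BJ_orth_def by blast
        then show "1 - (t n)\<^sup>2 < onorm (\<lambda>x. T x + scaleC (complex_of_real (t n) * \<omega>) (A x))"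
        proof -
          have "0 < (t n)\<^sup>2" using t[of n] by simp
          then show ?thesis using n le by linarith
        qed
      qed
      then have "\<forall>n. \<exists>x. norm x = 1 \<and> 1 - (t n)\<^sup>2 < norm (T x + scaleC (complex_of_real (t n) * \<omega>) (A x))"
        by blast
      then obtain x where "\<forall>n. norm (x n) = 1 \<and> 1 - (t n)\<^sup>2 < norm (T (x n) + scaleC (complex_of_real (t n) * \<omega>) (A (x n)))"
        by (erule choice[THEN exE])
      then have x: "\<And>n. norm (x n) = 1"
        and xb: "\<And>n. 1 - (t n)\<^sup>2 < norm (T (x n) + scaleC (complex_of_real (t n) * \<omega>) (A (x n)))"
        by auto
      define C1 where "C1 = (2 + (onorm A)\<^sup>2) / 2"
      define C2 where "C2 = 2 + (onorm A)\<^sup>2 + 2 * onorm A"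
      have g1: "- (t n * C1) \<le> Re (\<omega> * q (x n))" for n
        using bj_step(1)[OF T A n x \<omega> t xb] by (simp add: C1_def q_def)
      have g2: "1 - t n * C2 \<le> norm (T (x n))" for n
        using bj_step(2)[OF T A n x \<omega> t xb] by (simp add: C2_def)
      have g3: "norm (T (x n)) \<le> 1" for n using onorm[OF cbl_bl[OF T], of "x n"] n x by simp
      have t0: "t \<longlonglongrightarrow> 0" unfolding t_def using LIMSEQ_Suc[OF LIMSEQ_inverse_real_of_nat] .
      have "(\<lambda>n. 1 - t n * C2) \<longlonglongrightarrow> 1 - 0 * C2"
        by (intro tendsto_intros t0)
      then have lo: "(\<lambda>n. 1 - t n * C2) \<longlonglongrightarrow> 1" by simp
      have "(\<lambda>n. norm (T (x n))) \<longlonglongrightarrow> 1"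
      proof (rule tendsto_sandwich[OF _ _ lo tendsto_const])
        show "\<forall>\<^sub>F n in sequentially. 1 - t n * C2 \<le> norm (T (x n))" using g2 by (simp add: always_eventually)
        show "\<forall>\<^sub>F n in sequentially. norm (T (x n)) \<le> 1" using g3 by (simp add: always_eventually)
      qed
      then obtain r y where r: "strict_mono r" and xy: "(x \<circ> r) \<longlonglongrightarrow> y" and y: "norm y = 1" "norm (T y) = 1"
        using seq_comp[where x=x, OF T n dc x] by blast
      have L1: "(\<lambda>n. Re (\<omega> * q ((x \<circ> r) n))) \<longlonglongrightarrow> Re (\<omega> * q y)"
        unfolding q_def by (intro tendsto_intros q_tendsto[OF T A xy])
      have L2: "(\<lambda>n. - ((t \<circ> r) n * C1)) \<longlonglongrightarrow> - (0 * C1)"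
        by (intro tendsto_intros LIMSEQ_subseq_LIMSEQ[OF t0 r])
      have L3: "\<exists>N. \<forall>n\<ge>N. - ((t \<circ> r) n * C1) \<le> Re (\<omega> * q ((x \<circ> r) n))"
        using g1 by simp
      have "- (0 * C1) \<le> Re (\<omega> * q y)"
        by (rule LIMSEQ_le[OF L2 L1 L3])
      then have "0 \<le> Re (\<omega> * q y)" by simp
      moreover have "y \<in> M" using y M by simp
      ultimately show ?thesis by blast
    qed
    define S where "S = q ` M"
    have conv: "convex S"
    proof (rule convexI)
      fix z1 z2 and u v :: real
      assume z1: "z1 \<in> S" and z2: "z2 \<in> S" and uv0: "0 \<le> u" "0 \<le> v" "u + v = 1"
      have uv: "0 \<le> u \<and> 0 \<le> v \<and> u + v = 1" using uv0 by simp
      obtain x1 where x1: "x1 \<in> M" "z1 = q x1" using z1 S_def by blast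
      obtain x2 where x2: "x2 \<in> M" "z2 = q x2" using z2 S_def by blast
      have m1: "norm x1 = 1" "norm (T x1) = 1" using x1(1) M by auto
      have m2: "norm x2 = 1" "norm (T x2) = 1" using x2(1) M by auto
      have v01: "0 \<le> v" "v \<le> 1" using uv by auto
      obtain z where z: "norm z = 1" "norm (T z) = 1"
        "cinner (A z) (T z) = cinner (A x1) (T x1) + complex_of_real v * (cinner (A x2) (T x2) - cinner (A x1) (T x1))"
        using toeplitz[OF T A n m1 m2 v01] by blast
      have u: "u = 1 - v" using uv by simp
      have "u *\<^sub>R z1 + v *\<^sub>R z2 = complex_of_real (1 - v) * q x1 + complex_of_real v * q x2"
        unfolding u x1(2) x2(2) by (simp only: scaleR_conv_of_real)
      also have "\<dots> = q z"
        unfolding q_def z(3) by (simp add: algebra_simps)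
      finally have "u *\<^sub>R z1 + v *\<^sub>R z2 = q z" .
      then show "u *\<^sub>R z1 + v *\<^sub>R z2 \<in> S" using z M S_def by auto
    qed
    have clo: "closed S"
      unfolding closed_sequential_limits
    proof (intro allI impI, elim conjE)
      fix zs l assume zs: "\<forall>n. zs n \<in> S" and l: "zs \<longlonglongrightarrow> l"
      have "\<forall>n. \<exists>u. u \<in> M \<and> zs n = q u" using zs S_def by blast
      then obtain u where "\<forall>n. u n \<in> M \<and> zs n = q (u n)" by (erule choice[THEN exE])
      then have u: "\<And>n. u n \<in> M" and uz: "\<And>n. zs n = q (u n)" by auto
      have u1: "\<And>n. norm (u n) = 1" and u2: "\<And>n. norm (T (u n)) = 1" using u M by auto
      obtain r y where r: "strict_mono r" and uy: "(u \<circ> r) \<longlonglongrightarrow> y" and y: "norm y = 1" "norm (T y) = 1"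
        using seq_comp[where x=u, OF T n dc u1] u2 by auto
      have "(\<lambda>n. q ((u \<circ> r) n)) \<longlonglongrightarrow> q y"
        unfolding q_def by (rule q_tendsto[OF T A uy])
      moreover have "(\<lambda>n. q ((u \<circ> r) n)) \<longlonglongrightarrow> l"
        using LIMSEQ_subseq_LIMSEQ[OF l r] by (simp add: uz o_def)
      ultimately have "l = q y" using LIMSEQ_unique by blast
      then show "l \<in> S" using y M S_def by auto
    qed
    show "\<exists>x\<in>norm_attain_set T. cinner (A x) (T x) = 0"
    proof (rule ccontr)
      assume "\<not> ?thesis"
      then have "0 \<notin> S" unfolding S_def M_def q_def by auto
      then obtain a b where a: "a \<noteq> 0" and b: "0 < b" and ab: "\<forall>z\<in>S. inner a z > b"
        using separating_hyperplane_closed_0[OF conv clo] by blast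
      define \<omega> where "\<omega> = - cnj a / complex_of_real (cmod a)"
      have \<omega>1: "cmod \<omega> = 1" using a by (simp add: \<omega>_def norm_divide)
      obtain x where x: "x \<in> M" "0 \<le> Re (\<omega> * q x)" using H1[OF \<omega>1] by blast
      have "inner a (q x) > b" using ab x S_def by auto
      moreover have "Re (\<omega> * q x) = - inner a (q x) / cmod a"
        using a by (simp add: \<omega>_def inner_complex_def field_simps)
      ultimately have "Re (\<omega> * q x) < 0" using a b by (simp add: divide_neg_pos)
      then show False using x by simp
    qed
  next
    assume "\<exists>x\<in>norm_attain_set T. cinner (A x) (T x) = 0"
    then obtain x where x: "norm x = 1" "norm (T x) = 1" and q0: "cinner (A x) (T x) = 0"
      using M M_def by auto
    show "BJ_orth T A"
      unfolding BJ_orth_def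
    proof
      fix l :: complex
      have bl: "bounded_linear (\<lambda>x. T x + scaleC l (A x))" by (rule bl_comb[OF T A])
      have "cinner (T x) (scaleC l (A x)) = 0"
        using q0 by (subst cinner_commute) (simp add: cinner_scaleC_left)
      then have "(norm (T x + scaleC l (A x)))\<^sup>2 = 1 + (norm (scaleC l (A x)))\<^sup>2"
        by (simp add: norm_add_sq x)
      then have "1 \<le> (norm (T x + scaleC l (A x)))\<^sup>2" by simp
      then have "1 \<le> norm (T x + scaleC l (A x))"
        using norm_ge_zero one_le_power power2_le_imp_le by (metis one_power2)
      also have "\<dots> \<le> onorm (\<lambda>x. T x + scaleC l (A x))"
        using onorm[OF bl, of x] x by simp
      finally show "onorm T \<le> onorm (\<lambda>x. T x + scaleC l (A x))" using n by simp
    qed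
  qed
qed

end
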